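(* Let $n$ and $k$ be integers with $1 \le k < n$, and let $0 \le r \le k-1$. Consider a set of $n$ items, of which $k$ are "observed" and carry a total order (partial ranking) $\beta_1 \succ \beta_2 \succ \cdots \succ \beta_k$, and the remaining $n-k$ items are "unobserved". Let $j = \beta_{r+1}$ be the observed item having exactly $r$ observed items ranked above it, and let $i$ be an unobserved item. Call a complete ranking (total order) of all $n$ items compatible with $\beta$ if its restriction to the observed items coincides with $\beta_1 \succ \cdots \succ \beta_k$. Then the proportion of complete rankings compatible with $\beta$ in which $i \succ j$ equals $$p(n,k,r) = \frac{1}{t(n,k)} \sum_{s=0}^{n-k-1} V^{s}_{n-k-1}\,(s+1)\, S^{r}_{s+1}\,(n-k-s-1)!\, S^{n-k-s-1}_{k-r-1},$$ where $t(n,k) = (n-k)!\, S^{k}_{n-k}$ is the total number of complete rankings compatible with $\beta$, $S^a_b = \frac{(a+b)!}{a!\,b!}$ is the number of shuffles of two lists of lengths $a$ and $b$ (interleavings preserving the relative order within each list), and $V^a_b = \frac{b!}{(b-a)!}$ is the number of ordered selections of $a$ objects out of $b$.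
   Context: A ranking $\pi_1 \succ \pi_2 \succ \cdots$ means $\pi_1$ is ranked best. A partial ranking is a total order on a subset of the items; a complete ranking compatible with it is a linear extension, i.e., a total order on all items that preserves the relative order of the partially ranked items. *)

theory Defs
  imports Complex_Main "HOL-Combinatorics.Multiset_Permutations"
begin

text \<open>A complete ranking of the item set U is a list of all items without repetition,
  the head being the best-ranked item.\<close>

definition shuffle_count :: "nat \<Rightarrow> nat \<Rightarrow> real" where
  "shuffle_count a b = fact (a + b) / (fact a * fact b)"

definition sel_count :: "nat \<Rightarrow> nat \<Rightarrow> real" where
  "sel_count a b = fact b / fact (b - a)"

definition compatible :: "'a list \<Rightarrow> 'a list \<Rightarrow> bool" where
  "compatible beta sigma \<longleftrightarrow> filter (\<lambda>x. x \<in> set beta) sigma = beta"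

definition ranked_above :: "'a list \<Rightarrow> 'a \<Rightarrow> 'a \<Rightarrow> bool" where
  "ranked_above sigma x y \<longleftrightarrow>
     (\<exists>a b. a < b \<and> b < length sigma \<and> sigma ! a = x \<and> sigma ! b = y)"

definition t_count :: "nat \<Rightarrow> nat \<Rightarrow> real" where
  "t_count n k = fact (n - k) * shuffle_count k (n - k)"

definition p_prob :: "nat \<Rightarrow> nat \<Rightarrow> nat \<Rightarrow> real" where
  "p_prob n k r = (1 / t_count n k) *
     (\<Sum>s = 0..n - k - 1. sel_count s (n - k - 1) * real (s + 1) * shuffle_count r (s + 1)
        * fact (n - k - s - 1) * shuffle_count (n - k - s - 1) (k - r - 1))"

end

theory Submission
  imports Defs
begin



lemma choose_conv_ident:
  "(\<Sum>s\<le>N. ((a+s) choose s) * ((b + (N-s)) choose (N-s))) = (a+b+1+N) choose N"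
proof (induction b arbitrary: N)
  case 0
  then show ?case using sum_choose_lower[of a N] by simp
next
  case (Suc b)
  note IHb = Suc.IH
  show ?case
  proof (induction N)
    case 0 then show ?case by simp
  next
    case (Suc N)
    have split: "\<And>s. s \<le> N \<Longrightarrow> ((Suc b + (Suc N - s)) choose (Suc N - s))
        = ((Suc b + (N - s)) choose (N - s)) + ((b + (Suc N - s)) choose (Suc N - s))"
    proof -
      fix s assume "s \<le> N"
      then have e: "Suc N - s = Suc (N - s)" by simp
      show "?thesis s" unfolding e
        using binomial_Suc_Suc[of "Suc b + (N - s)" "N - s"] by simp
    qed
    have e1: "(\<Sum>s\<le>Suc N. ((a+s) choose s) * ((Suc b + (Suc N-s)) choose (Suc N-s)))
       = (\<Sum>s\<le>N. ((a+s) choose s) * ((Suc b + (Suc N-s)) choose (Suc N-s))) + ((a + Suc N) choose Suc N)"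
      by simp
    have e2: "(\<Sum>s\<le>N. ((a+s) choose s) * ((Suc b + (Suc N-s)) choose (Suc N-s)))
       = (\<Sum>s\<le>N. ((a+s) choose s) * ((Suc b + (N-s)) choose (N-s)))
         + (\<Sum>s\<le>N. ((a+s) choose s) * ((b + (Suc N-s)) choose (Suc N-s)))"
      unfolding sum.distrib[symmetric]
      by (rule sum.cong[OF refl]) (metis atMost_iff split distrib_left)
    have e3: "(\<Sum>s\<le>N. ((a+s) choose s) * ((b + (Suc N-s)) choose (Suc N-s))) + ((a + Suc N) choose Suc N)
       = (\<Sum>s\<le>Suc N. ((a+s) choose s) * ((b + (Suc N-s)) choose (Suc N-s)))"
      by simp
    have "(\<Sum>s\<le>Suc N. ((a+s) choose s) * ((Suc b + (Suc N-s)) choose (Suc N-s)))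
       = ((a + Suc b + 1 + N) choose N) + ((a + b + 1 + Suc N) choose Suc N)"
      unfolding e1 e2 add.assoc e3 using Suc.IH IHb[of "Suc N"] by (simp only: add.assoc add_Suc add_Suc_right plus_1_eq_Suc add_0)
    also have "\<dots> = (a + Suc b + 1 + Suc N) choose Suc N"
      using binomial_Suc_Suc[of "a + Suc b + 1 + N" N] by simp
    finally show ?case .
  qed
qed




lemma ranked_above_app: "y \<in> set bs \<Longrightarrow> ranked_above (as @ x # bs) x y"
  unfolding ranked_above_def
proof -
  assume "y \<in> set bs"
  then obtain j where j: "j < length bs" "bs ! j = y" by (auto simp: in_set_conv_nth)
  show "\<exists>a b. a < b \<and> b < length (as @ x # bs) \<and> (as @ x # bs) ! a = x \<and> (as @ x # bs) ! b = y"
    by (rule exI[of _ "length as"], rule exI[of _ "length as + 1 + j"]) (use j in \<open>auto simp: nth_append\<close>)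
qed

lemma ranked_above_split:
  assumes "ranked_above sigma x y"
  shows "\<exists>as bs. sigma = as @ x # bs \<and> y \<in> set bs"
proof -
  obtain a b where ab: "a < b" "b < length sigma" "sigma ! a = x" "sigma ! b = y"
    using assms unfolding ranked_above_def by blast
  have "sigma = take a sigma @ sigma ! a # drop (Suc a) sigma"
    using ab by (metis id_take_nth_drop order.strict_trans)
  moreover have "y \<in> set (drop (Suc a) sigma)"
    unfolding in_set_conv_nth using ab by (intro exI[of _ "b - Suc a"]) auto
  ultimately show ?thesis using ab by metis
qed

lemma ranked_above_filter:
  assumes "ranked_above sigma x y" "P x" "P y"
  shows "ranked_above (filter P sigma) x y"
proof -
  obtain as bs where "sigma = as @ x # bs" "y \<in> set bs"
    using ranked_above_split[OF assms(1)] by blast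
  then show ?thesis using assms by (simp add: ranked_above_app)
qed

lemma ranked_above_asym:
  assumes "distinct sigma" "ranked_above sigma x y"
  shows "\<not> ranked_above sigma y x"
proof
  assume "ranked_above sigma y x"
  then obtain c d where cd: "c < d" "d < length sigma" "sigma ! c = y" "sigma ! d = x"
    unfolding ranked_above_def by blast
  obtain a b where ab: "a < b" "b < length sigma" "sigma ! a = x" "sigma ! b = y"
    using assms unfolding ranked_above_def by blast
  have "a < length sigma" "c < length sigma" using ab cd by auto
  have "a = d" using nth_eq_iff_index_eq[OF assms(1), of a d] ab cd \<open>a < length sigma\<close> by simp
  moreover have "b = c" using nth_eq_iff_index_eq[OF assms(1), of b c] ab cd \<open>c < length sigma\<close> by simp
  ultimately show False using cd ab by simp
qed

lemma ranked_above_total: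
  assumes "x \<in> set sigma" "y \<in> set sigma" "x \<noteq> y"
  shows "ranked_above sigma x y \<or> ranked_above sigma y x"
proof -
  obtain a where a: "a < length sigma" "sigma ! a = x" using assms by (auto simp: in_set_conv_nth)
  obtain b where b: "b < length sigma" "sigma ! b = y" using assms by (auto simp: in_set_conv_nth)
  have "a \<noteq> b" using a b assms by auto
  then show ?thesis unfolding ranked_above_def using a b by (metis linorder_neqE_nat)
qed

lemma ranked_above_filter_iff:
  assumes "distinct sigma" "x \<in> set sigma" "y \<in> set sigma" "x \<noteq> y" "P x" "P y"
  shows "ranked_above (filter P sigma) x y \<longleftrightarrow> ranked_above sigma x y"
proof
  assume h: "ranked_above (filter P sigma) x y"
  show "ranked_above sigma x y"
  proof (rule ccontr)
    assume "\<not> ranked_above sigma x y"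
    then have "ranked_above sigma y x" using ranked_above_total[OF assms(2,3,4)] by simp
    then have "ranked_above (filter P sigma) y x" using ranked_above_filter[of sigma y x P] assms(5,6) by simp
    moreover have "distinct (filter P sigma)" using assms(1) by simp
    ultimately show False using h ranked_above_asym[of "filter P sigma" x y] by simp
  qed
next
  assume "ranked_above sigma x y"
  then show "ranked_above (filter P sigma) x y" using ranked_above_filter[of sigma x y P] assms(5,6) by simp
qed




lemma fiber_le:
  assumes fin: "finite U" and BU: "B \<subseteq> U"
    and g1: "\<gamma> \<in> permutations_of_set B" and g2: "\<gamma>' \<in> permutations_of_set B"
  shows "card {\<sigma> \<in> permutations_of_set U. filter (\<lambda>x. x \<in> B) \<sigma> = \<gamma>}
       \<le> card {\<sigma> \<in> permutations_of_set U. filter (\<lambda>x. x \<in> B) \<sigma> = \<gamma>'}"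
proof -
  define g where "g x = (if x \<in> B then \<gamma>' ! the_inv_into {..<length \<gamma>} (nth \<gamma>) x else x)" for x
  have sg: "set \<gamma> = B" "distinct \<gamma>" using g1 by (auto dest: permutations_of_setD)
  have sg': "set \<gamma>' = B" "distinct \<gamma>'" using g2 by (auto dest: permutations_of_setD)
  have len: "length \<gamma>' = length \<gamma>"
    using length_finite_permutations_of_set[OF g1] length_finite_permutations_of_set[OF g2] by simp
  have injn: "inj_on (nth \<gamma>) {..<length \<gamma>}" using sg(2) by (simp add: inj_on_nth)
  have g_nth: "g (\<gamma> ! j) = \<gamma>' ! j" if "j < length \<gamma>" for j
  proof -
    have "\<gamma> ! j \<in> B" using that sg(1) by auto
    moreover have "the_inv_into {..<length \<gamma>} (nth \<gamma>) (\<gamma> ! j) = j"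
      using the_inv_into_f_f[OF injn] that by simp
    ultimately show ?thesis unfolding g_def by simp
  qed
  have inB: "\<exists>j < length \<gamma>. x = \<gamma> ! j" if "x \<in> B" for x
    using that sg(1) by (auto simp: in_set_conv_nth)
  have memB: "g x \<in> B \<longleftrightarrow> x \<in> B" for x
  proof (cases "x \<in> B")
    case True
    then obtain j where "j < length \<gamma>" "x = \<gamma> ! j" using inB by blast
    then show ?thesis using g_nth len sg' True by auto
  next
    case False
    then show ?thesis unfolding g_def by simp
  qed
  have ginj: "inj g"
  proof (rule injI)
    fix x y assume e: "g x = g y"
    show "x = y"
    proof (cases "x \<in> B")
      case True
      then have "y \<in> B" using memB e by metis
      obtain j where j: "j < length \<gamma>" "x = \<gamma> ! j" using inB True by blast
      obtain l where l: "l < length \<gamma>" "y = \<gamma> ! l" using inB \<open>y \<in> B\<close> by blast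
      have "\<gamma>' ! j = \<gamma>' ! l" using e j l g_nth by simp
      then have "j = l" using nth_eq_iff_index_eq[OF sg'(2)] j l len by simp
      then show ?thesis using j l by simp
    next
      case False
      then have "y \<notin> B" using memB e by metis
      then show ?thesis using e False unfolding g_def by simp
    qed
  qed
  have gmap: "map g \<gamma> = \<gamma>'"
    by (rule nth_equalityI) (simp_all add: len g_nth)
  have gU: "g ` U = U"
  proof
    show "g ` U \<subseteq> U"
    proof
      fix y assume "y \<in> g ` U"
      then obtain x where x: "x \<in> U" "y = g x" by blast
      show "y \<in> U"
      proof (cases "x \<in> B")
        case True then show ?thesis using memB[of x] BU x by auto
      next
        case False then show ?thesis using x unfolding g_def by simp
      qed
    qed
  next
    show "U \<subseteq> g ` U"
    proof
      fix y assume y: "y \<in> U"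
      show "y \<in> g ` U"
      proof (cases "y \<in> B")
        case True
        then obtain j where j: "j < length \<gamma>" "y = \<gamma>' ! j" using sg' len by (auto simp: in_set_conv_nth)
        then have "y = g (\<gamma> ! j)" using g_nth by simp
        moreover have "\<gamma> ! j \<in> U" using j sg BU by auto
        ultimately show ?thesis by blast
      next
        case False
        then have "y = g y" unfolding g_def by simp
        then show ?thesis using y by blast
      qed
    qed
  qed
  let ?F = "\<lambda>\<gamma>. {\<sigma> \<in> permutations_of_set U. filter (\<lambda>x. x \<in> B) \<sigma> = \<gamma>}"
  have "inj_on (map g) (?F \<gamma>)"
    using ginj by (simp add: inj_on_def inj_map_eq_map)
  moreover have "map g ` ?F \<gamma> \<subseteq> ?F \<gamma>'"
  proof
    fix \<tau> assume "\<tau> \<in> map g ` ?F \<gamma>"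
    then obtain \<sigma> where s: "\<sigma> \<in> ?F \<gamma>" "\<tau> = map g \<sigma>" by blast
    have ps: "set \<sigma> = U" "distinct \<sigma>" using s(1) by (auto dest: permutations_of_setD)
    have "set \<tau> = U" using s(2) ps gU by simp
    moreover have "distinct \<tau>" using s(2) ps ginj by (simp add: distinct_map inj_on_subset[OF ginj])
    moreover have "filter (\<lambda>x. x \<in> B) \<tau> = \<gamma>'"
    proof -
      have "filter (\<lambda>x. x \<in> B) \<tau> = map g (filter (\<lambda>x. g x \<in> B) \<sigma>)"
        using s(2) by (simp add: filter_map comp_def)
      also have "filter (\<lambda>x. g x \<in> B) \<sigma> = filter (\<lambda>x. x \<in> B) \<sigma>" using memB by simp
      finally show ?thesis using s(1) gmap by simp
    qed
    ultimately show "\<tau> \<in> ?F \<gamma>'" by (auto intro: permutations_of_setI)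
  qed
  moreover have "finite (?F \<gamma>')" by simp
  ultimately show ?thesis using card_inj_on_le[of "map g" "?F \<gamma>" "?F \<gamma>'"] by blast
qed

lemma fiber_card:
  assumes fin: "finite U" and BU: "B \<subseteq> U" and g1: "\<gamma> \<in> permutations_of_set B"
  shows "fact (card U) = fact (card B) * card {\<sigma> \<in> permutations_of_set U. filter (\<lambda>x. x \<in> B) \<sigma> = \<gamma>}"
proof -
  let ?F = "\<lambda>\<gamma>. {\<sigma> \<in> permutations_of_set U. filter (\<lambda>x. x \<in> B) \<sigma> = \<gamma>}"
  have finB: "finite B" using finite_subset[OF BU fin] .
  have eq: "card (?F \<gamma>') = card (?F \<gamma>)" if "\<gamma>' \<in> permutations_of_set B" for \<gamma>'
    using fiber_le[OF fin BU that g1] fiber_le[OF fin BU g1 that] by simp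
  have U: "permutations_of_set U = (\<Union>\<gamma>'\<in>permutations_of_set B. ?F \<gamma>')"
  proof
    show "permutations_of_set U \<subseteq> (\<Union>\<gamma>'\<in>permutations_of_set B. ?F \<gamma>')"
    proof
      fix \<sigma> assume s: "\<sigma> \<in> permutations_of_set U"
      have ps: "set \<sigma> = U" "distinct \<sigma>" using s by (auto dest: permutations_of_setD)
      have "filter (\<lambda>x. x \<in> B) \<sigma> \<in> permutations_of_set B"
        using ps BU by (intro permutations_of_setI) auto
      then show "\<sigma> \<in> (\<Union>\<gamma>'\<in>permutations_of_set B. ?F \<gamma>')" using s by blast
    qed
  next
    show "(\<Union>\<gamma>'\<in>permutations_of_set B. ?F \<gamma>') \<subseteq> permutations_of_set U" by auto
  qed
  have c: "card (\<Union>\<gamma>'\<in>permutations_of_set B. ?F \<gamma>') = (\<Sum>\<gamma>'\<in>permutations_of_set B. card (?F \<gamma>'))"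
  proof (rule card_UN_disjoint)
    show "finite (permutations_of_set B)" by simp
    show "\<forall>i\<in>permutations_of_set B. finite (?F i)" by simp
    show "\<forall>i\<in>permutations_of_set B. \<forall>j\<in>permutations_of_set B. i \<noteq> j \<longrightarrow> ?F i \<inter> ?F j = {}"
      by blast
  qed
  have "card (permutations_of_set U) = (\<Sum>\<gamma>'\<in>permutations_of_set B. card (?F \<gamma>'))"
    by (subst U) (rule c)
  also have "\<dots> = (\<Sum>\<gamma>'\<in>permutations_of_set B. card (?F \<gamma>))" using eq by simp
  also have "\<dots> = fact (card B) * card (?F \<gamma>)" using finB by simp
  finally show ?thesis using card_permutations_of_set[OF fin] by simp
qed




lemma term_eq:
  fixes M s r b :: nat
  assumes "s \<le> M"
  shows "sel_count s M * real (s + 1) * shuffle_count r (s + 1) * fact (M - s)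
          * shuffle_count (M - s) b
       = fact M * real (r + 1) * real (((r+1+s) choose s) * ((b + (M - s)) choose (M - s)))"
proof -
  have c1: "real ((r+1+s) choose s) = fact (r+1+s) / (fact s * fact (r+1))"
    using binomial_fact[of s "r+1+s", where 'a=real] by simp
  have c2: "real ((b + (M - s)) choose (M - s)) = fact (b + (M - s)) / (fact (M - s) * fact b)"
    using binomial_fact[of "M - s" "b + (M - s)", where 'a=real] by simp
  have f1: "(fact (s+1) :: real) = real (s+1) * fact s" by (simp add: fact_Suc)
  have f2: "(fact (r+1) :: real) = real (r+1) * fact r" by (simp add: fact_Suc)
  have e: "r + (s + 1) = r + 1 + s" "M - s + b = b + (M - s)" by simp_all
  have g0: "\<And>(fM::real) fMs fs fr fb fR fB S1 R1. fMs \<noteq> 0 \<Longrightarrow> fs \<noteq> 0 \<Longrightarrow> fr \<noteq> 0 \<Longrightarrow> fb \<noteq> 0 \<Longrightarrow>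
     S1 \<noteq> 0 \<Longrightarrow> R1 \<noteq> 0 \<Longrightarrow>
     fM / fMs * S1 * (fR / (fr * (S1 * fs))) * fMs * (fB / (fMs * fb))
     = fM * R1 * (fR / (fs * (R1 * fr)) * (fB / (fMs * fb)))"
    by (simp add: field_simps)
  have g: "\<And>(fM::real) fMs fs fr fb fR fB. fMs \<noteq> 0 \<Longrightarrow> fs \<noteq> 0 \<Longrightarrow> fr \<noteq> 0 \<Longrightarrow> fb \<noteq> 0 \<Longrightarrow>
     fM / fMs * real (s + 1) * (fR / (fr * (real (s + 1) * fs))) * fMs * (fB / (fMs * fb))
     = fM * real (r + 1) * (fR / (fs * (real (r + 1) * fr)) * (fB / (fMs * fb)))"
    by (rule g0) simp_all
  show ?thesis
    unfolding sel_count_def shuffle_count_def c1 c2 of_nat_mult f1 f2 e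
    by (rule g) simp_all
qed

lemma t_val: "k \<le> n \<Longrightarrow> t_count n k = fact n / fact k"
  unfolding t_count_def shuffle_count_def by simp

lemma p_val:
  assumes "1 \<le> k" "k < n" "r \<le> k - 1"
  shows "p_prob n k r = real (r+1) / real (k+1)"
proof -
  define M where "M = n - k - 1"
  define b where "b = k - r - 1"
  have nM: "n - M = k + 1" using assms unfolding M_def by simp
  have idx: "\<And>s. n - k - s - 1 = M - s" unfolding M_def by simp
  have "(\<Sum>s = 0..n - k - 1. sel_count s (n - k - 1) * real (s + 1) * shuffle_count r (s + 1)
        * fact (n - k - s - 1) * shuffle_count (n - k - s - 1) (k - r - 1))
      = (\<Sum>s \<le> M. fact M * real (r + 1) * real (((r+1+s) choose s) * ((b + (M - s)) choose (M - s))))"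
    unfolding idx M_def[symmetric] b_def[symmetric] atLeast0AtMost
    by (rule sum.cong[OF refl], rule term_eq, simp)
  also have "\<dots> = fact M * real (r + 1) * real (\<Sum>s \<le> M. ((r+1+s) choose s) * ((b + (M - s)) choose (M - s)))"
    by (simp add: sum_distrib_left)
  also have "(\<Sum>s \<le> M. ((r+1+s) choose s) * ((b + (M - s)) choose (M - s))) = n choose M"
    using choose_conv_ident[of "r+1" b M] assms unfolding M_def b_def by simp
  also have "real (n choose M) = fact n / (fact M * fact (k+1))"
    using binomial_fact[of M n, where 'a=real] nM unfolding M_def by simp
  finally have S: "(\<Sum>s = 0..n - k - 1. sel_count s (n - k - 1) * real (s + 1) * shuffle_count r (s + 1)
        * fact (n - k - s - 1) * shuffle_count (n - k - s - 1) (k - r - 1))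
      = fact M * real (r + 1) * (fact n / (fact M * fact (k+1)))" .
  have fk: "(fact (k+1) :: real) = real (k+1) * fact k" by (simp add: fact_Suc)
  have g0: "\<And>(fM::real) fn fk K1 R1. fM \<noteq> 0 \<Longrightarrow> fn \<noteq> 0 \<Longrightarrow> fk \<noteq> 0 \<Longrightarrow> K1 \<noteq> 0 \<Longrightarrow>
      1 / (fn / fk) * (fM * R1 * (fn / (fM * (K1 * fk)))) = R1 / K1"
    by (simp add: field_simps)
  show ?thesis
    unfolding p_prob_def S t_val[OF less_imp_le[OF assms(2)]] fk
    by (rule g0) simp_all
qed




lemma ranked_above_app2:
  assumes "x \<in> set as" shows "ranked_above (as @ y # bs) x y"
proof -
  obtain as1 as2 where "as = as1 @ x # as2" using split_list[OF assms] by blast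
  then show ?thesis using ranked_above_app[of y "as2 @ y # bs" as1 x] by simp
qed

theorem theorem1:
  fixes U :: "'a set" and beta :: "'a list" and n k r :: nat and i :: 'a
  assumes "finite U" and "card U = n"
    and "1 \<le> k" and "k < n" and "r \<le> k - 1"
    and "distinct beta" and "length beta = k" and "set beta \<subseteq> U"
    and "i \<in> U" and "i \<notin> set beta"
  shows "real (card {sigma \<in> permutations_of_set U. compatible beta sigma}) = t_count n k
     \<and> real (card {sigma \<in> permutations_of_set U. compatible beta sigma \<and>
                        ranked_above sigma i (beta ! r)})
         / real (card {sigma \<in> permutations_of_set U. compatible beta sigma})
         = p_prob n k r"
proof -
  note fin = assms(1)
  let ?A1 = "{sigma \<in> permutations_of_set U. compatible beta sigma}"
  let ?A2 = "{sigma \<in> permutations_of_set U. compatible beta sigma \<and> ranked_above sigma i (beta ! r)}"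
  define B' where "B' = insert i (set beta)"
  let ?F = "\<lambda>\<gamma>. {\<sigma> \<in> permutations_of_set U. filter (\<lambda>x. x \<in> B') \<sigma> = \<gamma>}"
  define L where "L q = take q beta @ i # drop q beta" for q
  have rk: "r < k" using assms by simp
  have cB: "card (set beta) = k" using assms distinct_card by metis
  have cB': "card B' = k + 1" unfolding B'_def using cB assms by simp
  have B'U: "B' \<subseteq> U" unfolding B'_def using assms by simp
  have A1: "?A1 = {\<sigma> \<in> permutations_of_set U. filter (\<lambda>x. x \<in> set beta) \<sigma> = beta}"
    unfolding compatible_def by simp
  have c1: "fact n = fact k * card ?A1"
    unfolding A1 using fiber_card[OF fin assms(8), of beta] assms cB
    by (auto intro: permutations_of_setI)
  have Lp: "L q \<in> permutations_of_set B'" for q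
  proof (rule permutations_of_setI)
    show "set (L q) = B'" unfolding L_def B'_def
      by (metis append_take_drop_id insert_def set_append set_simps(2) Un_insert_right) 
    have "set (take q beta) \<inter> set (drop q beta) = {}"
      using set_take_disj_set_drop_if_distinct[OF assms(6), of q q] by simp
    then show "distinct (L q)" unfolding L_def using assms
      by (auto dest: in_set_takeD in_set_dropD)
  qed
  have cF: "fact n = fact (k+1) * card (?F (L q))" for q
    using fiber_card[OF fin B'U Lp[of q]] assms cB' by simp
  have filt: "filter (\<lambda>x. x \<in> set beta) (filter (\<lambda>x. x \<in> B') \<sigma>) = filter (\<lambda>x. x \<in> set beta) \<sigma>" for \<sigma>
    unfolding filter_filter B'_def by (rule filter_cong) auto
  have A2: "?A2 = (\<Union>q\<in>{..r}. ?F (L q))"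
  proof
    show "?A2 \<subseteq> (\<Union>q\<in>{..r}. ?F (L q))"
    proof
      fix \<sigma> assume s: "\<sigma> \<in> ?A2"
      have ps: "set \<sigma> = U" "distinct \<sigma>" using s by (auto dest: permutations_of_setD)
      define \<tau> where "\<tau> = filter (\<lambda>x. x \<in> B') \<sigma>"
      have dt: "distinct \<tau>" unfolding \<tau>_def using ps by simp
      have "i \<in> set \<tau>" unfolding \<tau>_def B'_def using ps assms by simp
      then obtain xs ys where t: "\<tau> = xs @ i # ys" using split_list by metis
      have ixy: "i \<notin> set xs" "i \<notin> set ys" using dt t by auto
      have sxy: "set xs \<subseteq> set beta" "set ys \<subseteq> set beta"
      proof -
        have "set \<tau> \<subseteq> B'" unfolding \<tau>_def by auto
        then have "set xs \<subseteq> B'" "set ys \<subseteq> B'" unfolding t by auto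
        then show "set xs \<subseteq> set beta" "set ys \<subseteq> set beta" using ixy unfolding B'_def by auto
      qed
      have "filter (\<lambda>x. x \<in> set beta) \<tau> = xs @ ys"
        using t sxy assms(10) filter_id_conv[of "\<lambda>x. x \<in> set beta" xs] filter_id_conv[of "\<lambda>x. x \<in> set beta" ys]
        by auto
      moreover have "filter (\<lambda>x. x \<in> set beta) \<tau> = beta"
        using s filt unfolding \<tau>_def compatible_def by simp
      ultimately have xy: "xs @ ys = beta" by simp
      define q where "q = length xs"
      have tq: "\<tau> = L q" unfolding L_def q_def t using xy by auto
      have "q \<le> r"
      proof (rule ccontr)
        assume "\<not> q \<le> r"
        then have "beta ! r = xs ! r" using xy q_def by (metis nth_append not_le)
        then have br: "beta ! r \<in> set xs" using \<open>\<not> q \<le> r\<close> q_def by simp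
        have "ranked_above \<tau> i (beta ! r)"
          unfolding \<tau>_def using s rk assms by (intro ranked_above_filter) (auto simp: B'_def)
        moreover have "ranked_above \<tau> (beta ! r) i" unfolding t using br ranked_above_app2 by metis
        ultimately show False using ranked_above_asym[OF dt] by blast
      qed
      then show "\<sigma> \<in> (\<Union>q\<in>{..r}. ?F (L q))" using s tq unfolding \<tau>_def by blast
    qed
  next
    show "(\<Union>q\<in>{..r}. ?F (L q)) \<subseteq> ?A2"
    proof
      fix \<sigma> assume "\<sigma> \<in> (\<Union>q\<in>{..r}. ?F (L q))"
      then obtain q where q: "q \<le> r" "\<sigma> \<in> permutations_of_set U" "filter (\<lambda>x. x \<in> B') \<sigma> = L q"
        by blast
      have ps: "set \<sigma> = U" "distinct \<sigma>" using q by (auto dest: permutations_of_setD)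
      have "filter (\<lambda>x. x \<in> set beta) \<sigma> = filter (\<lambda>x. x \<in> set beta) (L q)"
        using filt[of \<sigma>] q by simp
      also have "\<dots> = take q beta @ drop q beta" unfolding L_def using assms(10)
        filter_id_conv[of "\<lambda>x. x \<in> set beta" "take q beta"] filter_id_conv[of "\<lambda>x. x \<in> set beta" "drop q beta"]
        by (auto dest: in_set_takeD in_set_dropD)
      finally have comp: "compatible beta \<sigma>" unfolding compatible_def by simp
      have "beta ! r \<in> set (drop q beta)"
        unfolding in_set_conv_nth using q rk assms(7) by (intro exI[of _ "r - q"]) auto
      then have "ranked_above (L q) i (beta ! r)" unfolding L_def by (rule ranked_above_app)
      then have "ranked_above (filter (\<lambda>x. x \<in> B') \<sigma>) i (beta ! r)" using q by simp
      moreover have bb: "beta ! r \<in> set beta" using rk assms by simp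
      then have "beta ! r \<in> set \<sigma>" "i \<noteq> beta ! r" "i \<in> set \<sigma>" using ps assms by auto
      moreover have "i \<in> B'" "beta ! r \<in> B'" using bb unfolding B'_def by auto
      ultimately have "ranked_above \<sigma> i (beta ! r)"
        using ranked_above_filter_iff[OF ps(2), of i "beta ! r" "\<lambda>x. x \<in> B'"] by simp
      then show "\<sigma> \<in> ?A2" using comp q by blast
    qed
  qed
  have Linj: "L q = L q' \<Longrightarrow> q \<le> r \<Longrightarrow> q' \<le> r \<Longrightarrow> q = q'" for q q'
  proof -
    have key: "L a ! a = i" "b < a \<Longrightarrow> L a ! b \<noteq> i" if "a \<le> r" for a b
    proof -
      show "L a ! a = i" unfolding L_def using that rk assms by (simp add: nth_append)
      assume "b < a"
      then have "L a ! b = beta ! b" unfolding L_def using that rk assms by (simp add: nth_append)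
      moreover have "beta ! b \<in> set beta" using \<open>b < a\<close> that rk assms by simp
      ultimately show "L a ! b \<noteq> i" using assms by auto
    qed
    assume h: "L q = L q'" "q \<le> r" "q' \<le> r"
    show "q = q'"
    proof (rule ccontr)
      assume "q \<noteq> q'"
      then consider "q < q'" | "q' < q" by linarith
      then show False
        using key[of q] key[of q'] h by metis
    qed
  qed
  have c2: "card ?A2 = (r + 1) * card (?F (L 0))"
  proof -
    have "card ?A2 = (\<Sum>q\<le>r. card (?F (L q)))"
      unfolding A2
    proof (rule card_UN_disjoint)
      show "finite {..r}" by simp
      show "\<forall>q\<in>{..r}. finite (?F (L q))" by simp
      show "\<forall>q\<in>{..r}. \<forall>q'\<in>{..r}. q \<noteq> q' \<longrightarrow> ?F (L q) \<inter> ?F (L q') = {}"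
        using Linj by auto
    qed
    also have "\<dots> = (\<Sum>q\<le>r. card (?F (L 0)))"
    proof (rule sum.cong[OF refl])
      fix q
      have "fact (k+1) * card (?F (L q)) = fact (k+1) * card (?F (L 0))" using cF[of q] cF[of 0] by simp
      then show "card (?F (L q)) = card (?F (L 0))" by simp
    qed
    finally show ?thesis by simp
  qed
  have r1: "real (card ?A1) = fact n / fact k"
    using arg_cong[OF c1, of real] by (simp add: field_simps)
  have r2: "real (card ?A2) = real (r+1) * (fact n / fact (k+1))"
  proof -
    have "(fact n :: real) = fact (k+1) * real (card (?F (L 0)))"
      using arg_cong[OF cF[of 0], of real] by (simp only: of_nat_mult of_nat_fact)
    then have "real (card (?F (L 0))) = fact n / fact (k+1)"
      by (metis fact_nonzero mult.commute nonzero_eq_divide_eq)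
    then show ?thesis using c2 by (simp only: of_nat_mult)
  qed
  have fk: "(fact (k+1) :: real) = real (k+1) * fact k" by (simp add: fact_Suc)
  have g0: "\<And>(fn::real) fk K1 R1. fn \<noteq> 0 \<Longrightarrow> fk \<noteq> 0 \<Longrightarrow> K1 \<noteq> 0 \<Longrightarrow>
      R1 * (fn / (K1 * fk)) / (fn / fk) = R1 / K1"
    by (simp add: field_simps)
  show ?thesis
  proof
    show "real (card ?A1) = t_count n k" using r1 t_val assms by simp
    show "real (card ?A2) / real (card ?A1) = p_prob n k r"
      unfolding r1 r2 p_val[OF assms(3,4,5)] fk by (rule g0) simp_all
  qed
qed


end
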